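(* Let $G$ be a finite group with $Z(G)=I$, let $n\in\{2,3\}$, and let $(C_1,\dots,C_n,D)$ be a tuple of conjugacy classes of $G$ with $C_1,\dots,C_n$ non-trivial and $D$ either a class of involutions or the trivial class $\{\iota\}$. For $[\underline{\sigma}]=[\sigma_1,\dots,\sigma_n,\sigma_{n+1}]\in\Sigma^i(C_1,\dots,C_n,D)$ put $[\widehat{\underline{\sigma}}]=[\sigma_1,\dots,\sigma_n,\sigma_1,\dots,\sigma_n]\in\Sigma^i(C_1,\dots,C_n,C_1,\dots,C_n)$. If $[\underline{\sigma}],[\underline{\tau}]\in\Sigma^i(C_1,\dots,C_n,D)$ and $[\underline{\tau}]\in[\underline{\sigma}]^{B_{n+1}}$, then $[\widehat{\underline{\tau}}]\in[\widehat{\underline{\sigma}}]^{B_{2n}}$.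
   Context: $\iota$ is the identity and $I$ the trivial group. For conjugacy classes $C_1,\dots,C_m$ (here the trivial class is allowed), $\Sigma^i(C_1,\dots,C_m)$ is the set of $G$-conjugacy classes $[\sigma_1,\dots,\sigma_m]$ (simultaneous conjugation) of tuples with $\sigma_j\in C_j$, $\langle\sigma_1,\dots,\sigma_m\rangle=G$, $\sigma_1\cdots\sigma_m=\iota$. The Hurwitz braid group $H_m$ is generated by $\beta_2,\dots,\beta_m$ and acts from the right by $[\underline{\sigma}]^{\beta_i}=[\sigma_1,\dots,\sigma_{i-2},\sigma_{i-1}\sigma_i\sigma_{i-1}^{-1},\sigma_{i-1},\sigma_{i+1},\dots,\sigma_m]$; the pure braid group $B_m$ is the subgroup generated by $\beta_{ij}=\beta_{i+1}^{-1}\cdots\beta_{j-1}^{-1}\beta_j^2\beta_{j-1}\cdots\beta_{i+1}$, $1\le i<j\le m$, and preserves each $\Sigma^i(C_1,\dots,C_m)$. $X^{B_m}$ denotes the $B_m$-orbit of $X$. *)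

theory Defs
  imports "HOL-Algebra.Algebra"
begin

definition group_center :: "('a, 'b) monoid_scheme \<Rightarrow> 'a set" where
  "group_center G = {z \<in> carrier G. \<forall>g \<in> carrier G. z \<otimes>\<^bsub>G\<^esub> g = g \<otimes>\<^bsub>G\<^esub> z}"

definition is_conj_class :: "('a, 'b) monoid_scheme \<Rightarrow> 'a set \<Rightarrow> bool" where
  "is_conj_class G C \<longleftrightarrow>
     (\<exists>x \<in> carrier G. C = {g \<otimes>\<^bsub>G\<^esub> x \<otimes>\<^bsub>G\<^esub> inv\<^bsub>G\<^esub> g | g. g \<in> carrier G})"

definition tuple_prod :: "('a, 'b) monoid_scheme \<Rightarrow> 'a list \<Rightarrow> 'a" where
  "tuple_prod G xs = foldr (\<lambda>x acc. x \<otimes>\<^bsub>G\<^esub> acc) xs \<one>\<^bsub>G\<^esub>"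

definition Sigma_tuples :: "('a, 'b) monoid_scheme \<Rightarrow> 'a set list \<Rightarrow> 'a list set" where
  "Sigma_tuples G Cs = {xs. length xs = length Cs \<and> (\<forall>j < length Cs. xs ! j \<in> Cs ! j)
      \<and> generate G (set xs) = carrier G \<and> tuple_prod G xs = \<one>\<^bsub>G\<^esub>}"

definition tuple_conj :: "('a, 'b) monoid_scheme \<Rightarrow> 'a \<Rightarrow> 'a list \<Rightarrow> 'a list" where
  "tuple_conj G g xs = map (\<lambda>x. g \<otimes>\<^bsub>G\<^esub> x \<otimes>\<^bsub>G\<^esub> inv\<^bsub>G\<^esub> g) xs"

definition tclass :: "('a, 'b) monoid_scheme \<Rightarrow> 'a list \<Rightarrow> 'a list set" where
  "tclass G xs = {tuple_conj G g xs | g. g \<in> carrier G}"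

definition Sigma_i :: "('a, 'b) monoid_scheme \<Rightarrow> 'a set list \<Rightarrow> 'a list set set" where
  "Sigma_i G Cs = tclass G ` Sigma_tuples G Cs"

text \<open>Hurwitz generator beta_i (1-based index i, 2 <= i <= m) and its inverse, acting on the right.\<close>
definition hur :: "('a, 'b) monoid_scheme \<Rightarrow> nat \<Rightarrow> 'a list \<Rightarrow> 'a list" where
  "hur G i xs = xs[i - 2 := xs ! (i - 2) \<otimes>\<^bsub>G\<^esub> xs ! (i - 1) \<otimes>\<^bsub>G\<^esub> inv\<^bsub>G\<^esub> (xs ! (i - 2)),
                   i - 1 := xs ! (i - 2)]"

definition hur_inv :: "('a, 'b) monoid_scheme \<Rightarrow> nat \<Rightarrow> 'a list \<Rightarrow> 'a list" where
  "hur_inv G i xs = xs[i - 2 := xs ! (i - 1),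
                       i - 1 := inv\<^bsub>G\<^esub> (xs ! (i - 1)) \<otimes>\<^bsub>G\<^esub> xs ! (i - 2) \<otimes>\<^bsub>G\<^esub> xs ! (i - 1)]"

text \<open>Braid words: letters (i, True) = beta_i, (i, False) = beta_i^{-1}; read left to right.\<close>
definition act_letter :: "('a, 'b) monoid_scheme \<Rightarrow> nat \<times> bool \<Rightarrow> 'a list \<Rightarrow> 'a list" where
  "act_letter G l xs = (if snd l then hur G (fst l) xs else hur_inv G (fst l) xs)"

definition act_word :: "('a, 'b) monoid_scheme \<Rightarrow> (nat \<times> bool) list \<Rightarrow> 'a list \<Rightarrow> 'a list" where
  "act_word G w xs = foldl (\<lambda>ys l. act_letter G l ys) xs w"

definition word_inv :: "(nat \<times> bool) list \<Rightarrow> (nat \<times> bool) list" where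
  "word_inv w = rev (map (\<lambda>(k, b). (k, \<not> b)) w)"

text \<open>beta_ij = beta_{i+1}^{-1} ... beta_{j-1}^{-1} beta_j^2 beta_{j-1} ... beta_{i+1}.\<close>
definition beta_word :: "nat \<Rightarrow> nat \<Rightarrow> (nat \<times> bool) list" where
  "beta_word i j = map (\<lambda>k. (k, False)) [Suc i..<j] @ [(j, True), (j, True)]
                   @ map (\<lambda>k. (k, True)) (rev [Suc i..<j])"

text \<open>Words representing elements of the pure braid group B_m (products of the beta_ij and their inverses).\<close>
definition pure_words :: "nat \<Rightarrow> (nat \<times> bool) list set" where
  "pure_words m = {concat ls | ls. \<forall>l \<in> set ls. \<exists>i j. 1 \<le> i \<and> i < j \<and> j \<le> m \<and>
                      (l = beta_word i j \<or> l = word_inv (beta_word i j))}"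

definition pure_orbit :: "('a, 'b) monoid_scheme \<Rightarrow> nat \<Rightarrow> 'a list set \<Rightarrow> 'a list set set" where
  "pure_orbit G m Y = (\<Union>w \<in> pure_words m. \<Union>xs \<in> Y. {tclass G (act_word G w xs)})"

end

theory Submission
  imports Defs
begin
lemma hur_decomp:
  "length ys = k \<Longrightarrow> hur G (k+2) (ys @ p # q # zs) = ys @ (p \<otimes>\<^bsub>G\<^esub> q \<otimes>\<^bsub>G\<^esub> inv\<^bsub>G\<^esub> p) # p # zs"
  by (simp add: hur_def list_update_append nth_append)

lemma hur_inv_decomp:
  "length ys = k \<Longrightarrow> hur_inv G (k+2) (ys @ p # q # zs) = ys @ q # (inv\<^bsub>G\<^esub> q \<otimes>\<^bsub>G\<^esub> p \<otimes>\<^bsub>G\<^esub> q) # zs"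
  by (simp add: hur_inv_def list_update_append nth_append)

lemma hur_2: "hur G 2 (p # q # zs) = (p \<otimes>\<^bsub>G\<^esub> q \<otimes>\<^bsub>G\<^esub> inv\<^bsub>G\<^esub> p) # p # zs"
  by (simp add: hur_def)
lemma hur_3: "hur G 3 (x # p # q # zs) = x # (p \<otimes>\<^bsub>G\<^esub> q \<otimes>\<^bsub>G\<^esub> inv\<^bsub>G\<^esub> p) # p # zs"
  by (simp add: hur_def)
lemma hur_4: "hur G 4 (x # y # p # q # zs) = x # y # (p \<otimes>\<^bsub>G\<^esub> q \<otimes>\<^bsub>G\<^esub> inv\<^bsub>G\<^esub> p) # p # zs"
  by (simp add: hur_def)
lemma hur_inv_2: "hur_inv G 2 (p # q # zs) = q # (inv\<^bsub>G\<^esub> q \<otimes>\<^bsub>G\<^esub> p \<otimes>\<^bsub>G\<^esub> q) # zs"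
  by (simp add: hur_inv_def)
lemma hur_inv_3: "hur_inv G 3 (x # p # q # zs) = x # q # (inv\<^bsub>G\<^esub> q \<otimes>\<^bsub>G\<^esub> p \<otimes>\<^bsub>G\<^esub> q) # zs"
  by (simp add: hur_inv_def)
lemma hur_inv_4: "hur_inv G 4 (x # y # p # q # zs) = x # y # q # (inv\<^bsub>G\<^esub> q \<otimes>\<^bsub>G\<^esub> p \<otimes>\<^bsub>G\<^esub> q) # zs"
  by (simp add: hur_inv_def)

lemmas hur_simps = hur_2 hur_3 hur_4 hur_inv_2 hur_inv_3 hur_inv_4

fun blk :: "nat \<times> nat \<times> bool \<Rightarrow> (nat \<times> bool) list" where
  "blk (i, j, s) = (if s then beta_word i j else word_inv (beta_word i j))"

definition bwd :: "(nat \<times> nat \<times> bool) list \<Rightarrow> (nat \<times> bool) list" where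
  "bwd bs = concat (map blk bs)"

fun okb :: "nat \<Rightarrow> nat \<times> nat \<times> bool \<Rightarrow> bool" where
  "okb m (i, j, s) = (1 \<le> i \<and> i < j \<and> j \<le> m)"

fun shb :: "nat \<Rightarrow> nat \<times> nat \<times> bool \<Rightarrow> nat \<times> nat \<times> bool" where
  "shb k (i, j, s) = (i + k, j + k, s)"

definition okw :: "nat \<Rightarrow> (nat \<times> bool) list \<Rightarrow> bool" where
  "okw m w \<longleftrightarrow> (\<forall>l \<in> set w. 2 \<le> fst l \<and> fst l \<le> m)"

lemma bwd_Nil[simp]: "bwd [] = []" by (simp add: bwd_def)
lemma bwd_Cons[simp]: "bwd (b # bs) = blk b @ bwd bs" by (simp add: bwd_def)
lemma bwd_append[simp]: "bwd (bs @ cs) = bwd bs @ bwd cs" by (simp add: bwd_def)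

lemma act_word_Nil[simp]: "act_word G [] xs = xs" by (simp add: act_word_def)
lemma act_word_Cons[simp]: "act_word G (l # w) xs = act_word G w (act_letter G l xs)"
  by (simp add: act_word_def)
lemma act_word_append: "act_word G (w1 @ w2) xs = act_word G w2 (act_word G w1 xs)"
  by (simp add: act_word_def)

lemma okw_Cons[simp]: "okw m (l # w) \<longleftrightarrow> 2 \<le> fst l \<and> fst l \<le> m \<and> okw m w"
  by (auto simp: okw_def)
lemma okw_Nil[simp]: "okw m []" by (simp add: okw_def)
lemma okw_append[simp]: "okw m (w1 @ w2) \<longleftrightarrow> okw m w1 \<and> okw m w2"
  by (auto simp: okw_def)

lemma okw_blk: "okb m b \<Longrightarrow> okw m (blk b)"
  by (cases b) (auto simp: okw_def beta_word_def word_inv_def)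

lemma okw_bwd: "\<forall>b\<in>set bs. okb m b \<Longrightarrow> okw m (bwd bs)"
  by (induction bs) (auto simp: okw_blk)

lemma okb_mono: "okb m b \<Longrightarrow> m \<le> m' \<Longrightarrow> okb m' b"
  by (cases b) auto

lemma length_act_letter[simp]: "length (act_letter G l xs) = length xs"
  by (simp add: act_letter_def hur_def hur_inv_def)

lemma length_act_word[simp]: "length (act_word G w xs) = length xs"
  by (induction w arbitrary: xs) auto

lemma decomp:
  assumes "2 \<le> k" "k \<le> length xs"
  shows "\<exists>ys p q zs. xs = ys @ p # q # zs \<and> length ys = k - 2"
proof -
  have a: "drop (k-2) xs = xs ! (k-2) # drop (Suc (k-2)) xs"
    using assms by (simp add: Cons_nth_drop_Suc)
  have b: "drop (Suc (k-2)) xs = xs ! (Suc (k-2)) # drop (Suc (Suc (k-2))) xs"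
    using assms by (simp add: Cons_nth_drop_Suc)
  have "xs = take (k-2) xs @ xs ! (k-2) # xs ! (Suc (k-2)) # drop (Suc (Suc (k-2))) xs"
    using a b by (metis append_take_drop_id)
  moreover have "length (take (k-2) xs) = k - 2" using assms by simp
  ultimately show ?thesis by blast
qed

lemma map_plus_upt: "map (\<lambda>x. x + k) [a..<b] = [a+k..<b+k]"
  by (induction b) auto

lemma blk_shb: "blk (shb k b) = map (\<lambda>(x, y). (x + k, y)) (blk b)"
proof (cases b)
  case (fields i j s)
  have "[Suc (i + k)..<j + k] = map (\<lambda>x. x + k) [Suc i..<j]"
    by (simp add: map_plus_upt)
  then show ?thesis using fields
    by (simp add: beta_word_def word_inv_def rev_map comp_def)
qed

lemma bwd_shb: "bwd (map (shb k) bs) = map (\<lambda>(x, y). (x + k, y)) (bwd bs)"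
  by (induction bs) (auto simp: blk_shb)

lemma okb_shb: "okb m b \<Longrightarrow> okb (m + k) (shb k b)"
  by (cases b) auto

definition hres :: "('a, 'b) monoid_scheme \<Rightarrow> bool \<Rightarrow> 'a \<Rightarrow> 'a \<Rightarrow> 'a list" where
  "hres G s p q = (if s then [p \<otimes>\<^bsub>G\<^esub> q \<otimes>\<^bsub>G\<^esub> inv\<^bsub>G\<^esub> p, p] else [q, inv\<^bsub>G\<^esub> q \<otimes>\<^bsub>G\<^esub> p \<otimes>\<^bsub>G\<^esub> q])"

lemma act_letter_decomp:
  "length ys = k \<Longrightarrow> act_letter G (Suc (Suc k), s) (ys @ p # q # zs) = ys @ hres G s p q @ zs"
  using hur_decomp[of ys k G p q zs] hur_inv_decomp[of ys k G p q zs]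
  by (simp add: act_letter_def hres_def)

lemma letter_form: "2 \<le> fst l \<Longrightarrow> \<exists>k s. l = (Suc (Suc k), s)"
proof -
  assume "2 \<le> fst l"
  then have "l = (Suc (Suc (fst l - 2)), snd l)" by (cases l) auto
  then show ?thesis by blast
qed

lemma act_letter_prefix:
  assumes "2 \<le> fst l" "fst l \<le> length xs"
  shows "act_letter G l (xs @ zs) = act_letter G l xs @ zs"
proof -
  obtain ys p q vs where d: "xs = ys @ p # q # vs" "length ys = fst l - 2"
    using decomp[OF assms] by blast
  obtain k s where l: "l = (Suc (Suc k), s)" using letter_form assms(1) by blast
  have 1: "act_letter G (Suc (Suc k), s) (ys @ p # q # (vs @ zs)) = ys @ hres G s p q @ (vs @ zs)"
    by (rule act_letter_decomp) (use d l in simp)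
  have 2: "act_letter G (Suc (Suc k), s) (ys @ p # q # vs) = ys @ hres G s p q @ vs"
    by (rule act_letter_decomp) (use d l in simp)
  show ?thesis using 1 2 d l by simp
qed

lemma act_word_prefix:
  "okw (length xs) w \<Longrightarrow> act_word G w (xs @ zs) = act_word G w xs @ zs"
  by (induction w arbitrary: xs) (auto simp: act_letter_prefix)

lemma act_letter_shift:
  assumes "2 \<le> fst l" "fst l \<le> length zs" "length ys = k"
  shows "act_letter G (fst l + k, snd l) (ys @ zs) = ys @ act_letter G l zs"
proof -
  obtain us p q vs where d: "zs = us @ p # q # vs" "length us = fst l - 2"
    using decomp[OF assms(1,2)] by blast
  obtain i s where l: "l = (Suc (Suc i), s)" using letter_form assms(1) by blast
  have 1: "act_letter G (Suc (Suc (i + k)), s) ((ys @ us) @ p # q # vs) = (ys @ us) @ hres G s p q @ vs"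
    by (rule act_letter_decomp) (use d l assms in simp)
  have 2: "act_letter G (Suc (Suc i), s) (us @ p # q # vs) = us @ hres G s p q @ vs"
    by (rule act_letter_decomp) (use d l in simp)
  show ?thesis using 1 2 d l by simp
qed

lemma act_word_shift:
  "okw (length zs) w \<Longrightarrow> length ys = k \<Longrightarrow>
   act_word G (map (\<lambda>(x, y). (x + k, y)) w) (ys @ zs) = ys @ act_word G w zs"
proof (induction w arbitrary: zs)
  case Nil then show ?case by simp
next
  case (Cons l w)
  have "act_letter G (case l of (x, y) \<Rightarrow> (x + k, y)) (ys @ zs) = ys @ act_letter G l zs"
    using act_letter_shift[of l zs ys k G] Cons.prems by (cases l) auto
  then show ?case using Cons by simp
qed

lemma (in group) cancel1: "x \<in> carrier G \<Longrightarrow> y \<in> carrier G \<Longrightarrow> x \<otimes> (inv x \<otimes> y) = y"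
  by (simp add: m_assoc[symmetric])
lemma (in group) cancel2: "x \<in> carrier G \<Longrightarrow> y \<in> carrier G \<Longrightarrow> inv x \<otimes> (x \<otimes> y) = y"
  by (simp add: m_assoc[symmetric])
lemmas (in group) gsimps = m_assoc inv_mult_group cancel1 cancel2 l_inv r_inv inv_inv

lemma (in group) right_inv_eq:
  assumes a: "x \<in> carrier G" "y \<in> carrier G" "x \<otimes> y = \<one>"
  shows "y = inv x"
proof -
  have "y = inv x \<otimes> (x \<otimes> y)" by (simp only: cancel2[OF a(1) a(2)])
  also have "\<dots> = inv x" using a by simp
  finally show ?thesis .
qed

lemma (in group) conj_class_sub: "is_conj_class G C \<Longrightarrow> C \<subseteq> carrier G"
  by (auto simp: is_conj_class_def)

lemma tuple_prod_Nil[simp]: "tuple_prod G [] = \<one>\<^bsub>G\<^esub>" by (simp add: tuple_prod_def)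
lemma tuple_prod_Cons[simp]: "tuple_prod G (x # xs) = x \<otimes>\<^bsub>G\<^esub> tuple_prod G xs"
  by (simp add: tuple_prod_def)

lemma (in group) tuple_prod_closed: "set xs \<subseteq> carrier G \<Longrightarrow> tuple_prod G xs \<in> carrier G"
  by (induction xs) auto

lemma (in group) tuple_prod_append:
  "set xs \<subseteq> carrier G \<Longrightarrow> set ys \<subseteq> carrier G \<Longrightarrow> tuple_prod G (xs @ ys) = tuple_prod G xs \<otimes> tuple_prod G ys"
  by (induction xs) (auto simp: m_assoc tuple_prod_closed)

lemma tuple_conj_Nil[simp]: "tuple_conj G g [] = []" by (simp add: tuple_conj_def)
lemma tuple_conj_Cons[simp]: "tuple_conj G g (x # xs) = (g \<otimes>\<^bsub>G\<^esub> x \<otimes>\<^bsub>G\<^esub> inv\<^bsub>G\<^esub> g) # tuple_conj G g xs"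
  by (simp add: tuple_conj_def)
lemma tuple_conj_append[simp]: "tuple_conj G g (xs @ ys) = tuple_conj G g xs @ tuple_conj G g ys"
  by (simp add: tuple_conj_def)
lemma length_tuple_conj[simp]: "length (tuple_conj G g xs) = length xs"
  by (simp add: tuple_conj_def)
lemma take_tuple_conj: "take n (tuple_conj G g xs) = tuple_conj G g (take n xs)"
  by (simp add: tuple_conj_def take_map)

lemma (in group) tuple_conj_carrier: "g \<in> carrier G \<Longrightarrow> set xs \<subseteq> carrier G \<Longrightarrow> set (tuple_conj G g xs) \<subseteq> carrier G"
  by (auto simp: tuple_conj_def)

lemma (in group) tuple_conj_one: "set xs \<subseteq> carrier G \<Longrightarrow> tuple_conj G \<one> xs = xs"
  by (induction xs) auto

lemma (in group) tuple_conj_mult: "g \<in> carrier G \<Longrightarrow> h \<in> carrier G \<Longrightarrow> set xs \<subseteq> carrier G \<Longrightarrow>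
   tuple_conj G g (tuple_conj G h xs) = tuple_conj G (g \<otimes> h) xs"
  by (induction xs) (auto simp: gsimps)

lemma (in group) tuple_prod_conj: "g \<in> carrier G \<Longrightarrow> set xs \<subseteq> carrier G \<Longrightarrow>
   tuple_prod G (tuple_conj G g xs) = g \<otimes> tuple_prod G xs \<otimes> inv g"
  by (induction xs) (auto simp: gsimps tuple_prod_closed)

lemma (in group) tclass_conj: "K \<in> carrier G \<Longrightarrow> set z \<subseteq> carrier G \<Longrightarrow> tclass G (tuple_conj G K z) = tclass G z"
proof -
  assume K: "K \<in> carrier G" and z: "set z \<subseteq> carrier G"
  show ?thesis
  proof
    show "tclass G (tuple_conj G K z) \<subseteq> tclass G z"
      using K z by (auto simp: tclass_def tuple_conj_mult)
    show "tclass G z \<subseteq> tclass G (tuple_conj G K z)"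
    proof
      fix y assume "y \<in> tclass G z"
      then obtain g where g: "g \<in> carrier G" "y = tuple_conj G g z" by (auto simp: tclass_def)
      have "y = tuple_conj G (g \<otimes> inv K) (tuple_conj G K z)"
        using g K z by (simp add: tuple_conj_mult m_assoc)
      then show "y \<in> tclass G (tuple_conj G K z)" using g K by (auto simp: tclass_def)
    qed
  qed
qed

lemma (in group) tclass_self: "set z \<subseteq> carrier G \<Longrightarrow> z \<in> tclass G z"
proof -
  assume "set z \<subseteq> carrier G"
  then have "z = tuple_conj G \<one> z" using tuple_conj_one[of z] by simp
  then show "z \<in> tclass G z" unfolding tclass_def by blast
qed

lemma (in group) hres_carrier: "p \<in> carrier G \<Longrightarrow> q \<in> carrier G \<Longrightarrow> set (hres G s p q) \<subseteq> carrier G"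
  by (simp add: hres_def)

lemma (in group) hres_prod: "p \<in> carrier G \<Longrightarrow> q \<in> carrier G \<Longrightarrow> set zs \<subseteq> carrier G \<Longrightarrow>
   tuple_prod G (hres G s p q @ zs) = p \<otimes> (q \<otimes> tuple_prod G zs)"
  by (simp add: hres_def gsimps tuple_prod_closed)

lemma (in group) hres_conj: "g \<in> carrier G \<Longrightarrow> p \<in> carrier G \<Longrightarrow> q \<in> carrier G \<Longrightarrow>
   tuple_conj G g (hres G s p q) = hres G s (g \<otimes> p \<otimes> inv g) (g \<otimes> q \<otimes> inv g)"
  by (simp add: hres_def gsimps)

lemma letter_split:
  assumes "2 \<le> fst l" "fst l \<le> length xs"
  shows "\<exists>ys p q vs k s. l = (Suc (Suc k), s) \<and> xs = ys @ p # q # vs \<and> length ys = k"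
proof -
  obtain ys p q vs where d: "xs = ys @ p # q # vs" "length ys = fst l - 2"
    using decomp[OF assms] by blast
  obtain k s where l: "l = (Suc (Suc k), s)" using letter_form assms(1) by blast
  show ?thesis using d l by auto
qed

lemma (in group) act_letter_props:
  assumes "2 \<le> fst l" "fst l \<le> length xs" "set xs \<subseteq> carrier G"
  shows "set (act_letter G l xs) \<subseteq> carrier G \<and> tuple_prod G (act_letter G l xs) = tuple_prod G xs
    \<and> (\<forall>g \<in> carrier G. act_letter G l (tuple_conj G g xs) = tuple_conj G g (act_letter G l xs))"
proof -
  obtain ys p q vs k s where d: "l = (Suc (Suc k), s)" "xs = ys @ p # q # vs" "length ys = k"
    using letter_split[OF assms(1,2)] by blast
  have e: "act_letter G l xs = ys @ hres G s p q @ vs"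
    using d act_letter_decomp[of ys k G s p q vs] by simp
  have c: "p \<in> carrier G" "q \<in> carrier G" "set ys \<subseteq> carrier G" "set vs \<subseteq> carrier G"
    using assms(3) d by auto
  have 1: "set (act_letter G l xs) \<subseteq> carrier G" using e c hres_carrier by auto
  have 2: "tuple_prod G (act_letter G l xs) = tuple_prod G xs"
  proof -
    have "tuple_prod G (act_letter G l xs) = tuple_prod G ys \<otimes> tuple_prod G (hres G s p q @ vs)"
      using e c hres_carrier[of p q s] by (simp add: tuple_prod_append)
    also have "\<dots> = tuple_prod G ys \<otimes> (p \<otimes> (q \<otimes> tuple_prod G vs))"
      using c by (simp add: hres_prod)
    also have "\<dots> = tuple_prod G xs" using c d by (simp add: tuple_prod_append)
    finally show ?thesis .
  qed
  have 3: "act_letter G l (tuple_conj G g xs) = tuple_conj G g (act_letter G l xs)" if g: "g \<in> carrier G" for g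
  proof -
    have "act_letter G l (tuple_conj G g xs) =
      act_letter G (Suc (Suc k), s) (tuple_conj G g ys @ (g \<otimes> p \<otimes> inv g) # (g \<otimes> q \<otimes> inv g) # tuple_conj G g vs)"
      using d by simp
    also have "\<dots> = tuple_conj G g ys @ hres G s (g \<otimes> p \<otimes> inv g) (g \<otimes> q \<otimes> inv g) @ tuple_conj G g vs"
      by (rule act_letter_decomp) (simp add: d)
    also have "\<dots> = tuple_conj G g (act_letter G l xs)"
      using e g c by (simp add: hres_conj)
    finally show ?thesis .
  qed
  show ?thesis using 1 2 3 by blast
qed

lemma (in group) act_word_props:
  "okw (length xs) w \<Longrightarrow> set xs \<subseteq> carrier G \<Longrightarrow>
   set (act_word G w xs) \<subseteq> carrier G \<and> tuple_prod G (act_word G w xs) = tuple_prod G xs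
    \<and> (\<forall>g \<in> carrier G. act_word G w (tuple_conj G g xs) = tuple_conj G g (act_word G w xs))"
proof (induction w arbitrary: xs)
  case Nil then show ?case by simp
next
  case (Cons l w)
  have L: "set (act_letter G l xs) \<subseteq> carrier G \<and> tuple_prod G (act_letter G l xs) = tuple_prod G xs
    \<and> (\<forall>g \<in> carrier G. act_letter G l (tuple_conj G g xs) = tuple_conj G g (act_letter G l xs))"
    using act_letter_props[of l xs] Cons.prems by simp
  have I: "set (act_word G w (act_letter G l xs)) \<subseteq> carrier G \<and>
     tuple_prod G (act_word G w (act_letter G l xs)) = tuple_prod G (act_letter G l xs)
    \<and> (\<forall>g \<in> carrier G. act_word G w (tuple_conj G g (act_letter G l xs)) = tuple_conj G g (act_word G w (act_letter G l xs)))"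
    using Cons.IH[of "act_letter G l xs"] Cons.prems L by simp
  show ?case using L I by simp
qed

lemma bw12: "beta_word 1 2 = [(2,True),(2,True)]" by (simp add: beta_word_def upt_rec)
lemma bw13: "beta_word 1 3 = [(2,False),(3,True),(3,True),(2,True)]" by (simp add: beta_word_def upt_rec)
lemma bw23: "beta_word 2 3 = [(3,True),(3,True)]" by (simp add: beta_word_def upt_rec)
lemma bw14: "beta_word 1 4 = [(2,False),(3,False),(4,True),(4,True),(3,True),(2,True)]" by (simp add: beta_word_def upt_rec)
lemma bw24: "beta_word 2 4 = [(3,False),(4,True),(4,True),(3,True)]" by (simp add: beta_word_def upt_rec)
lemma bw34: "beta_word 3 4 = [(4,True),(4,True)]" by (simp add: beta_word_def upt_rec)
lemmas bws = bw12 bw13 bw23 bw14 bw24 bw34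

lemma (in group) conc3_1_True:
  assumes "a \<in> carrier G" "b \<in> carrier G"
  shows "act_word G (blk (1,3,True)) [a, b, inv b \<otimes> inv a] = tuple_conj G (inv b) (act_word G (bwd []) [a, b, inv b \<otimes> inv a])"
  apply (simp only: blk.simps bws bwd_Cons bwd_Nil append_Nil2 if_True if_False)
  apply (simp add: word_inv_def act_word_def act_letter_def hur_simps tuple_conj_def assms gsimps)
  done

lemma (in group) conc3_1_False:
  assumes "a \<in> carrier G" "b \<in> carrier G"
  shows "act_word G (blk (1,3,False)) [a, b, inv b \<otimes> inv a] = tuple_conj G (b) (act_word G (bwd []) [a, b, inv b \<otimes> inv a])"
  apply (simp only: blk.simps bws bwd_Cons bwd_Nil append_Nil2 if_True if_False)
  apply (simp add: word_inv_def act_word_def act_letter_def hur_simps tuple_conj_def assms gsimps)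
  done

lemma (in group) conc3_2_True:
  assumes "a \<in> carrier G" "b \<in> carrier G"
  shows "act_word G (blk (2,3,True)) [a, b, inv b \<otimes> inv a] = tuple_conj G (inv a) (act_word G (bwd []) [a, b, inv b \<otimes> inv a])"
  apply (simp only: blk.simps bws bwd_Cons bwd_Nil append_Nil2 if_True if_False)
  apply (simp add: word_inv_def act_word_def act_letter_def hur_simps tuple_conj_def assms gsimps)
  done

lemma (in group) conc3_2_False:
  assumes "a \<in> carrier G" "b \<in> carrier G"
  shows "act_word G (blk (2,3,False)) [a, b, inv b \<otimes> inv a] = tuple_conj G (a) (act_word G (bwd []) [a, b, inv b \<otimes> inv a])"
  apply (simp only: blk.simps bws bwd_Cons bwd_Nil append_Nil2 if_True if_False)
  apply (simp add: word_inv_def act_word_def act_letter_def hur_simps tuple_conj_def assms gsimps)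
  done

lemma (in group) conc4_1_True:
  assumes "a \<in> carrier G" "b \<in> carrier G" "c \<in> carrier G"
  shows "act_word G (blk (1,4,True)) [a, b, c, inv c \<otimes> inv b \<otimes> inv a] = tuple_conj G (inv c \<otimes> inv b) (act_word G (bwd [(2,3,True)]) [a, b, c, inv c \<otimes> inv b \<otimes> inv a])"
  apply (simp only: blk.simps bws bwd_Cons bwd_Nil append_Nil2 append_Cons append_Nil if_True if_False)
  apply (simp add: word_inv_def act_word_def act_letter_def hur_simps tuple_conj_def assms gsimps)
  done

lemma (in group) conc4_1_False:
  assumes "a \<in> carrier G" "b \<in> carrier G" "c \<in> carrier G"
  shows "act_word G (blk (1,4,False)) [a, b, c, inv c \<otimes> inv b \<otimes> inv a] = tuple_conj G (b \<otimes> c) (act_word G (bwd [(2,3,False)]) [a, b, c, inv c \<otimes> inv b \<otimes> inv a])"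
  apply (simp only: blk.simps bws bwd_Cons bwd_Nil append_Nil2 append_Cons append_Nil if_True if_False)
  apply (simp add: word_inv_def act_word_def act_letter_def hur_simps tuple_conj_def assms gsimps)
  done

lemma (in group) conc4_2_True:
  assumes "a \<in> carrier G" "b \<in> carrier G" "c \<in> carrier G"
  shows "act_word G (blk (2,4,True)) [a, b, c, inv c \<otimes> inv b \<otimes> inv a] = tuple_conj G (inv c \<otimes> b \<otimes> c) (act_word G (bwd [(2,3,False), (1,2,False)]) [a, b, c, inv c \<otimes> inv b \<otimes> inv a])"
  apply (simp only: blk.simps bws bwd_Cons bwd_Nil append_Nil2 append_Cons append_Nil if_True if_False)
  apply (simp add: word_inv_def act_word_def act_letter_def hur_simps tuple_conj_def assms gsimps)
  done

lemma (in group) conc4_2_False: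
  assumes "a \<in> carrier G" "b \<in> carrier G" "c \<in> carrier G"
  shows "act_word G (blk (2,4,False)) [a, b, c, inv c \<otimes> inv b \<otimes> inv a] = tuple_conj G (a \<otimes> inv b \<otimes> inv a) (act_word G (bwd [(1,2,True), (2,3,True)]) [a, b, c, inv c \<otimes> inv b \<otimes> inv a])"
  apply (simp only: blk.simps bws bwd_Cons bwd_Nil append_Nil2 append_Cons append_Nil if_True if_False)
  apply (simp add: word_inv_def act_word_def act_letter_def hur_simps tuple_conj_def assms gsimps)
  done

lemma (in group) conc4_3_True:
  assumes "a \<in> carrier G" "b \<in> carrier G" "c \<in> carrier G"
  shows "act_word G (blk (3,4,True)) [a, b, c, inv c \<otimes> inv b \<otimes> inv a] = tuple_conj G (inv b \<otimes> inv a) (act_word G (bwd [(1,2,True)]) [a, b, c, inv c \<otimes> inv b \<otimes> inv a])"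
  apply (simp only: blk.simps bws bwd_Cons bwd_Nil append_Nil2 append_Cons append_Nil if_True if_False)
  apply (simp add: word_inv_def act_word_def act_letter_def hur_simps tuple_conj_def assms gsimps)
  done

lemma (in group) conc4_3_False:
  assumes "a \<in> carrier G" "b \<in> carrier G" "c \<in> carrier G"
  shows "act_word G (blk (3,4,False)) [a, b, c, inv c \<otimes> inv b \<otimes> inv a] = tuple_conj G (a \<otimes> b) (act_word G (bwd [(1,2,False)]) [a, b, c, inv c \<otimes> inv b \<otimes> inv a])"
  apply (simp only: blk.simps bws bwd_Cons bwd_Nil append_Nil2 append_Cons append_Nil if_True if_False)
  apply (simp add: word_inv_def act_word_def act_letter_def hur_simps tuple_conj_def assms gsimps)
  done
lemma list3: "length xs = 3 \<Longrightarrow> \<exists>a b c. xs = [a,b,c]"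
  by (auto simp: numeral_eq_Suc length_Suc_conv)
lemma list4: "length xs = 4 \<Longrightarrow> \<exists>a b c d. xs = [a,b,c,d]"
  by (auto simp: numeral_eq_Suc length_Suc_conv)

lemma ex_helper: "g \<in> carrier G \<Longrightarrow> \<forall>c\<in>set cs. okb n c \<Longrightarrow> A = tuple_conj G g (act_word G (bwd cs) xs) \<Longrightarrow>
  \<exists>cs g. g \<in> carrier G \<and> (\<forall>c\<in>set cs. okb n c) \<and> A = tuple_conj G g (act_word G (bwd cs) xs)"
  by blast

lemma (in group) replace_last:
  assumes n: "n = 2 \<or> n = 3" and len: "length xs = Suc n" and car: "set xs \<subseteq> carrier G"
    and pr: "tuple_prod G xs = \<one>" and ok: "okb (Suc n) bl"
  shows "\<exists>cs g. g \<in> carrier G \<and> (\<forall>c\<in>set cs. okb n c) \<and> act_word G (blk bl) xs = tuple_conj G g (act_word G (bwd cs) xs)"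
proof -
  obtain i j s where b: "bl = (i, j, s)" by (cases bl)
  show ?thesis
  proof (cases "j \<le> n")
    case True
    have "okw (length xs) (blk bl)" using ok len okw_blk by simp
    then have "set (act_word G (blk bl) xs) \<subseteq> carrier G" using act_word_props car by blast
    then have eq: "act_word G (blk bl) xs = tuple_conj G \<one> (act_word G (bwd [bl]) xs)" by (simp add: tuple_conj_one)
    have "okb n bl" using True ok b by simp
    then show ?thesis by (intro ex_helper[OF _ _ eq]) auto
  next
    case False
    then have j: "j = Suc n" using ok b by simp
    have i: "1 \<le> i" "i < Suc n" using ok b by auto
    show ?thesis using n
    proof
      assume n2: "n = 2"
      obtain a b' c where xs: "xs = [a, b', c]" using len n2 list3[of xs] by auto
      have ca: "a \<in> carrier G" "b' \<in> carrier G" "c \<in> carrier G" using car xs by auto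
      have "(a \<otimes> b') \<otimes> c = \<one>" using pr xs ca by (simp add: m_assoc)
      then have "c = inv (a \<otimes> b')" using ca by (intro right_inv_eq) auto
      then have X: "xs = [a, b', inv b' \<otimes> inv a]" using xs ca by (simp add: inv_mult_group)
      have i12: "i = 1 \<or> i = 2" using i n2 by linarith
      consider "i = 1" "s" | "i = 1" "\<not>s" | "i = 2" "s" | "i = 2" "\<not>s" using i12 by (cases s) auto
      then show ?thesis
      proof cases
        case 1
        have "bl = (1, 3, True)" using 1 b j n2 by simp
        then have eq: "act_word G (blk bl) xs = tuple_conj G (inv b') (act_word G (bwd []) xs)"
          unfolding X by (simp only: conc3_1_True[OF ca(1,2)])
        show ?thesis by (rule ex_helper[OF _ _ eq]) (simp_all add: ca)
      next
        case 2
        have "bl = (1, 3, False)" using 2 b j n2 by simp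
        then have eq: "act_word G (blk bl) xs = tuple_conj G (b') (act_word G (bwd []) xs)"
          unfolding X by (simp only: conc3_1_False[OF ca(1,2)])
        show ?thesis by (rule ex_helper[OF _ _ eq]) (simp_all add: ca)
      next
        case 3
        have "bl = (2, 3, True)" using 3 b j n2 by simp
        then have eq: "act_word G (blk bl) xs = tuple_conj G (inv a) (act_word G (bwd []) xs)"
          unfolding X by (simp only: conc3_2_True[OF ca(1,2)])
        show ?thesis by (rule ex_helper[OF _ _ eq]) (simp_all add: ca)
      next
        case 4
        have "bl = (2, 3, False)" using 4 b j n2 by simp
        then have eq: "act_word G (blk bl) xs = tuple_conj G (a) (act_word G (bwd []) xs)"
          unfolding X by (simp only: conc3_2_False[OF ca(1,2)])
        show ?thesis by (rule ex_helper[OF _ _ eq]) (simp_all add: ca)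
      qed
    next
      assume n3: "n = 3"
      obtain a b' c d where xs: "xs = [a, b', c, d]" using len n3 list4[of xs] by auto
      have ca: "a \<in> carrier G" "b' \<in> carrier G" "c \<in> carrier G" "d \<in> carrier G" using car xs by auto
      have "(a \<otimes> b' \<otimes> c) \<otimes> d = \<one>" using pr xs ca by (simp add: m_assoc)
      then have "d = inv (a \<otimes> b' \<otimes> c)" using ca by (intro right_inv_eq) auto
      then have X: "xs = [a, b', c, inv c \<otimes> inv b' \<otimes> inv a]" using xs ca by (simp add: inv_mult_group m_assoc)
      have i123: "i = 1 \<or> i = 2 \<or> i = 3" using i n3 by linarith
      consider "i = 1" "s" | "i = 1" "\<not>s" | "i = 2" "s" | "i = 2" "\<not>s" | "i = 3" "s" | "i = 3" "\<not>s"
        using i123 by (cases s) auto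
      then show ?thesis
      proof cases
        case 1
        have "bl = (1, 4, True)" using 1 b j n3 by simp
        then have eq: "act_word G (blk bl) xs = tuple_conj G (inv c \<otimes> inv b') (act_word G (bwd [(2,3,True)]) xs)"
          unfolding X by (simp only: conc4_1_True[OF ca(1,2,3)])
        show ?thesis by (rule ex_helper[OF _ _ eq]) (simp_all add: ca n3)
      next
        case 2
        have "bl = (1, 4, False)" using 2 b j n3 by simp
        then have eq: "act_word G (blk bl) xs = tuple_conj G (b' \<otimes> c) (act_word G (bwd [(2,3,False)]) xs)"
          unfolding X by (simp only: conc4_1_False[OF ca(1,2,3)])
        show ?thesis by (rule ex_helper[OF _ _ eq]) (simp_all add: ca n3)
      next
        case 3
        have "bl = (2, 4, True)" using 3 b j n3 by simp
        then have eq: "act_word G (blk bl) xs = tuple_conj G (inv c \<otimes> b' \<otimes> c) (act_word G (bwd [(2,3,False),(1,2,False)]) xs)"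
          unfolding X by (simp only: conc4_2_True[OF ca(1,2,3)])
        show ?thesis by (rule ex_helper[OF _ _ eq]) (simp_all add: ca n3)
      next
        case 4
        have "bl = (2, 4, False)" using 4 b j n3 by simp
        then have eq: "act_word G (blk bl) xs = tuple_conj G (a \<otimes> inv b' \<otimes> inv a) (act_word G (bwd [(1,2,True),(2,3,True)]) xs)"
          unfolding X by (simp only: conc4_2_False[OF ca(1,2,3)])
        show ?thesis by (rule ex_helper[OF _ _ eq]) (simp_all add: ca n3)
      next
        case 5
        have "bl = (3, 4, True)" using 5 b j n3 by simp
        then have eq: "act_word G (blk bl) xs = tuple_conj G (inv b' \<otimes> inv a) (act_word G (bwd [(1,2,True)]) xs)"
          unfolding X by (simp only: conc4_3_True[OF ca(1,2,3)])
        show ?thesis by (rule ex_helper[OF _ _ eq]) (simp_all add: ca n3)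
      next
        case 6
        have "bl = (3, 4, False)" using 6 b j n3 by simp
        then have eq: "act_word G (blk bl) xs = tuple_conj G (a \<otimes> b') (act_word G (bwd [(1,2,False)]) xs)"
          unfolding X by (simp only: conc4_3_False[OF ca(1,2,3)])
        show ?thesis by (rule ex_helper[OF _ _ eq]) (simp_all add: ca n3)
      qed
    qed
  qed
qed

lemma (in group) reduce_word:
  assumes n: "n = 2 \<or> n = 3" and len: "length xs = Suc n" and car: "set xs \<subseteq> carrier G"
    and pr: "tuple_prod G xs = \<one>"
  shows "\<forall>b\<in>set bs. okb (Suc n) b \<Longrightarrow> \<exists>cs g. g \<in> carrier G \<and> (\<forall>c\<in>set cs. okb n c) \<and>
           act_word G (bwd bs) xs = tuple_conj G g (act_word G (bwd cs) xs)"
proof (induction bs rule: rev_induct)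
  case Nil
  have "act_word G (bwd []) xs = tuple_conj G \<one> (act_word G (bwd []) xs)" using car by (simp add: tuple_conj_one)
  then show ?case by (rule ex_helper[where cs="[]" and g="\<one>", rotated 2]) auto
next
  case (snoc b bs)
  obtain cs g where g: "g \<in> carrier G" and cs: "\<forall>c\<in>set cs. okb n c"
    and eq: "act_word G (bwd bs) xs = tuple_conj G g (act_word G (bwd cs) xs)" using snoc by auto
  define y where "y = act_word G (bwd cs) xs"
  have cs': "\<forall>c\<in>set cs. okb (Suc n) c" using cs okb_mono by auto
  have oky: "okw (length xs) (bwd cs)" using okw_bwd[OF cs'] len by simp
  have yp: "set y \<subseteq> carrier G" "tuple_prod G y = \<one>" "length y = Suc n"
    using act_word_props[OF oky car] pr len y_def by auto
  have okb: "okb (Suc n) b" using snoc.prems by simp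
  obtain ds h where h: "h \<in> carrier G" and ds: "\<forall>c\<in>set ds. okb n c"
    and eq2: "act_word G (blk b) y = tuple_conj G h (act_word G (bwd ds) y)"
    using replace_last[OF n yp(3) yp(1) yp(2) okb] by auto
  have okbl: "okw (length y) (blk b)" using okw_blk[OF okb] yp(3) by simp
  have ds': "\<forall>c\<in>set ds. okb (Suc n) c" using ds okb_mono by auto
  have okd: "okw (length y) (bwd ds)" using okw_bwd[OF ds'] yp(3) by simp
  have zc: "set (act_word G (bwd ds) y) \<subseteq> carrier G" using act_word_props[OF okd yp(1)] by blast
  have "act_word G (bwd (bs @ [b])) xs = act_word G (blk b) (tuple_conj G g y)"
    using eq y_def by (simp add: act_word_append)
  also have "\<dots> = tuple_conj G g (act_word G (blk b) y)" using act_word_props[OF okbl yp(1)] g by auto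
  also have "\<dots> = tuple_conj G g (tuple_conj G h (act_word G (bwd ds) y))" using eq2 by simp
  also have "\<dots> = tuple_conj G (g \<otimes> h) (act_word G (bwd (cs @ ds)) xs)"
    using tuple_conj_mult[OF g h zc] y_def by (simp add: act_word_append)
  finally have "act_word G (bwd (bs @ [b])) xs = tuple_conj G (g \<otimes> h) (act_word G (bwd (cs @ ds)) xs)" .
  then show ?case by (rule ex_helper[rotated 2]) (use g h cs ds in auto)
qed

lemma pure_words_blocks: "w \<in> pure_words m \<Longrightarrow> \<exists>bs. (\<forall>b\<in>set bs. okb m b) \<and> w = bwd bs"
proof -
  assume "w \<in> pure_words m"
  then obtain ls where w: "w = concat ls" and H: "\<forall>l\<in>set ls. \<exists>i j. 1 \<le> i \<and> i < j \<and> j \<le> m \<and>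
      (l = beta_word i j \<or> l = word_inv (beta_word i j))" by (auto simp: pure_words_def)
  have "\<exists>bs. (\<forall>b\<in>set bs. okb m b) \<and> concat ls = bwd bs" using H
  proof (induction ls)
    case Nil show ?case by (intro exI[of _ "[]"]) simp
  next
    case (Cons l ls)
    then obtain bs where bs: "\<forall>b\<in>set bs. okb m b" "concat ls = bwd bs" by auto
    from Cons.prems obtain i j where ij: "1 \<le> i" "i < j" "j \<le> m"
      "l = beta_word i j \<or> l = word_inv (beta_word i j)" by auto
    then obtain s where "l = blk (i, j, s)" by (metis blk.simps)
    then show ?case using bs ij by (intro exI[of _ "(i, j, s) # bs"]) auto
  qed
  then show ?thesis using w by simp
qed

lemma bwd_pure: "\<forall>b\<in>set bs. okb m b \<Longrightarrow> bwd bs \<in> pure_words m"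
proof -
  assume H: "\<forall>b\<in>set bs. okb m b"
  have "\<forall>l\<in>set (map blk bs). \<exists>i j. 1 \<le> i \<and> i < j \<and> j \<le> m \<and>
      (l = beta_word i j \<or> l = word_inv (beta_word i j))"
  proof
    fix l assume "l \<in> set (map blk bs)"
    then obtain b where b: "b \<in> set bs" "l = blk b" by auto
    obtain i j s where bb: "b = (i, j, s)" by (cases b)
    then have "okb m (i, j, s)" using H b by blast
    then have "1 \<le> i \<and> i < j \<and> j \<le> m" by simp
    moreover have "l = beta_word i j \<or> l = word_inv (beta_word i j)" using b bb by simp
    ultimately show "\<exists>i j. 1 \<le> i \<and> i < j \<and> j \<le> m \<and> (l = beta_word i j \<or> l = word_inv (beta_word i j))"
      by blast
  qed
  then show ?thesis unfolding pure_words_def bwd_def by blast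
qed

theorem proposition10:
  fixes G (structure)
    and n :: nat and Cs :: "'a set list" and D :: "'a set" and \<sigma> \<tau> :: "'a list"
  assumes "group G" and "finite (carrier G)"
    and "group_center G = {\<one>}"
    and "n \<in> {2, 3}"
    and "length Cs = n"
    and "\<forall>C \<in> set Cs. is_conj_class G C \<and> C \<noteq> {\<one>}"
    and "is_conj_class G D"
    and "D = {\<one>} \<or> (\<forall>x \<in> D. group.ord G x = 2)"
    and "\<sigma> \<in> Sigma_tuples G (Cs @ [D])"
    and "\<tau> \<in> Sigma_tuples G (Cs @ [D])"
    and "tclass G \<tau> \<in> pure_orbit G (n + 1) (tclass G \<sigma>)"
  shows "tclass G (take n \<tau> @ take n \<tau>) \<in> pure_orbit G (2 * n) (tclass G (take n \<sigma> @ take n \<sigma>))"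
proof -
  interpret group G by (rule assms(1))
  have n: "n = 2 \<or> n = 3" using assms(4) by auto
  have carS: "\<And>C. C \<in> set (Cs @ [D]) \<Longrightarrow> C \<subseteq> carrier G" using assms(6,7) conj_class_sub by auto
  have tup: "length xs = Suc n \<and> set xs \<subseteq> carrier G \<and> tuple_prod G xs = \<one>"
    if "xs \<in> Sigma_tuples G (Cs @ [D])" for xs
  proof -
    from that have l: "length xs = length (Cs @ [D])" and m: "\<forall>j<length (Cs @ [D]). xs ! j \<in> (Cs @ [D]) ! j"
      and p: "tuple_prod G xs = \<one>" by (auto simp: Sigma_tuples_def)
    have "set xs \<subseteq> carrier G"
    proof
      fix x assume "x \<in> set xs"
      then obtain j where j: "j < length xs" "x = xs ! j" by (auto simp: in_set_conv_nth)
      then have "x \<in> (Cs @ [D]) ! j" using m l by auto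
      moreover have "(Cs @ [D]) ! j \<in> set (Cs @ [D])" using j l by (metis nth_mem)
      ultimately show "x \<in> carrier G" using carS by blast
    qed
    then show ?thesis using l p assms(5) by simp
  qed
  have sig: "length \<sigma> = Suc n" "set \<sigma> \<subseteq> carrier G" "tuple_prod G \<sigma> = \<one>" using tup[OF assms(9)] by auto
  have tau: "set \<tau> \<subseteq> carrier G" using tup[OF assms(10)] by auto
  from assms(11) obtain w xs where w: "w \<in> pure_words (Suc n)" and xs: "xs \<in> tclass G \<sigma>"
    and tc: "tclass G \<tau> = tclass G (act_word G w xs)" by (auto simp: pure_orbit_def)
  obtain g0 where g0: "g0 \<in> carrier G" "xs = tuple_conj G g0 \<sigma>" using xs by (auto simp: tclass_def)
  have "\<tau> \<in> tclass G \<tau>" using tclass_self tau by auto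
  then obtain h where h: "h \<in> carrier G" "\<tau> = tuple_conj G h (act_word G w xs)"
    using tc by (auto simp: tclass_def)
  obtain bs where bs: "\<forall>b\<in>set bs. okb (Suc n) b" "w = bwd bs" using pure_words_blocks[OF w] by auto
  have xsp: "length xs = Suc n" "set xs \<subseteq> carrier G" "tuple_prod G xs = \<one>"
    using g0 sig tuple_conj_carrier[of g0 \<sigma>] tuple_prod_conj[of g0 \<sigma>] by auto
  obtain cs g1 where g1: "g1 \<in> carrier G" and cs: "\<forall>c\<in>set cs. okb n c"
    and eq: "act_word G (bwd bs) xs = tuple_conj G g1 (act_word G (bwd cs) xs)"
    using reduce_word[OF n xsp bs(1)] by auto
  have cs': "\<forall>c\<in>set cs. okb (Suc n) c" using cs okb_mono by auto
  have okcs: "okw (Suc n) (bwd cs)" using okw_bwd[OF cs'] .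
  have okcsn: "okw n (bwd cs)" using okw_bwd[OF cs] .
  define y where "y = act_word G (bwd cs) \<sigma>"
  have ycar: "set y \<subseteq> carrier G" using act_word_props[of \<sigma> "bwd cs"] okcs sig y_def by auto
  have "act_word G (bwd cs) xs = tuple_conj G g0 y"
    using act_word_props[of \<sigma> "bwd cs"] okcs sig y_def g0 by auto
  define K where "K = h \<otimes> g1 \<otimes> g0"
  have Kc: "K \<in> carrier G" using K_def h g1 g0 by simp
  have tauK: "\<tau> = tuple_conj G K y"
    using h bs eq \<open>act_word G (bwd cs) xs = tuple_conj G g0 y\<close> K_def ycar g0 g1
    by (simp add: tuple_conj_mult tuple_conj_carrier m_assoc)
  define t where "t = take n \<sigma>"
  have lt: "length t = n" using t_def sig by simp
  have tcar: "set t \<subseteq> carrier G" using t_def sig set_take_subset by fastforce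
  have "\<sigma> = t @ drop n \<sigma>" using t_def by simp
  then have "y = act_word G (bwd cs) t @ drop n \<sigma>"
    using y_def act_word_prefix[of t "bwd cs" G "drop n \<sigma>"] okcsn lt by simp
  define u where "u = act_word G (bwd cs) t"
  have takey: "take n y = u" using u_def lt \<open>y = act_word G (bwd cs) t @ drop n \<sigma>\<close> by simp
  have ucar: "set u \<subseteq> carrier G" using act_word_props[of t "bwd cs"] okcsn lt tcar u_def by auto
  have lu: "length u = n" using u_def lt by simp
  have hat: "take n \<tau> @ take n \<tau> = tuple_conj G K (u @ u)"
    using tauK takey by (simp add: take_tuple_conj)
  define W where "W = bwd (cs @ map (shb n) cs)"
  have "act_word G W (t @ t) = act_word G (map (\<lambda>(x, y). (x + n, y)) (bwd cs)) (act_word G (bwd cs) (t @ t))"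
    using W_def by (simp add: act_word_append bwd_shb)
  also have "act_word G (bwd cs) (t @ t) = u @ t"
    using act_word_prefix[of t "bwd cs" G t] okcsn lt u_def by simp
  also have "act_word G (map (\<lambda>(x, y). (x + n, y)) (bwd cs)) (u @ t) = u @ u"
    using act_word_shift[of t "bwd cs" u n G] okcsn lt lu u_def by simp
  finally have Wact: "act_word G W (t @ t) = u @ u" .
  have "\<forall>c\<in>set (cs @ map (shb n) cs). okb (2 * n) c"
  proof
    fix c assume "c \<in> set (cs @ map (shb n) cs)"
    then consider "c \<in> set cs" | c' where "c' \<in> set cs" "c = shb n c'" by auto
    then show "okb (2 * n) c"
    proof cases
      case 1 then show ?thesis using cs okb_mono[of n c "2 * n"] by auto
    next
      case 2 then show ?thesis using cs okb_shb[of n c' n] by (simp add: mult_2)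
    qed
  qed
  then have Wpure: "W \<in> pure_words (2 * n)" using W_def bwd_pure by blast
  have tt: "t @ t \<in> tclass G (take n \<sigma> @ take n \<sigma>)" using tclass_self[of "t @ t"] tcar t_def by simp
  have "tclass G (take n \<tau> @ take n \<tau>) = tclass G (act_word G W (t @ t))"
    using hat Wact tclass_conj[OF Kc, of "u @ u"] ucar by simp
  then show ?thesis unfolding pure_orbit_def using Wpure tt by blast
qed

end
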